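(* There exist an absolute constant $c>0$, a calibrated distribution $\mathcal D$ of $(p,y)\in[0,1]\times\{0,1\}$, and a decision task $Z=(A,U)$ with $U:A\times\{0,1\}\to[0,1]$ such that for every positive integer $T$ and every randomized response function $r:[0,1]\to\Delta(A)$, if $S$ is the uniform distribution on $T$ i.i.d. data points drawn from $\mathcal D$, then with probability at least $1/3$ over $S$, $\mathsf{SR}_Z(r,S)\ge c\,T^{-1/2}$.
   Context: A distribution of $(p,y)$ is calibrated if $\mathbb E[y\mid p]=p$. A decision task $Z=(A,U)$ consists of an action set $A$ and a utility function $U:A\times\{0,1\}\to[0,1]$. For a randomized response function $r:[0,1]\to\Delta(A)$ and a distribution $\mathcal D$ on $[0,1]\times\{0,1\}$, the swap regret is $\mathsf{SR}_Z(r,\mathcal D)=\sup_{\sigma:A\to A}\mathbb E_{(p,y)\sim\mathcal D,\,a\sim r(p)}[U(\sigma(a),y)-U(a,y)]$. *)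

theory Defs
  imports "HOL-Probability.Probability"
begin

definition calibrated :: "(real \<times> real) pmf \<Rightarrow> bool" where
  "calibrated D \<longleftrightarrow>
     set_pmf D \<subseteq> {0..1} \<times> {0,1} \<and>
     (\<forall>p \<in> fst ` set_pmf D.
        measure_pmf.expectation (cond_pmf D {z. fst z = p}) snd = p)"

definition decision_task :: "nat set \<Rightarrow> (nat \<Rightarrow> real \<Rightarrow> real) \<Rightarrow> bool" where
  "decision_task A U \<longleftrightarrow> A \<noteq> {} \<and> finite A \<and>
     (\<forall>a\<in>A. \<forall>y\<in>{0,1}. U a y \<in> {0..1})"

definition response_fn :: "nat set \<Rightarrow> (real \<Rightarrow> nat pmf) \<Rightarrow> bool" where
  "response_fn A r \<longleftrightarrow> (\<forall>p\<in>{0..1}. set_pmf (r p) \<subseteq> A)"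

definition swap_regret ::
  "nat set \<Rightarrow> (nat \<Rightarrow> real \<Rightarrow> real) \<Rightarrow> (real \<Rightarrow> nat pmf) \<Rightarrow> (real \<times> real) pmf \<Rightarrow> real" where
  "swap_regret A U r D =
     (SUP \<sigma>\<in>{\<sigma>. \<sigma> ` A \<subseteq> A}.
        measure_pmf.expectation D
          (\<lambda>(p, y). measure_pmf.expectation (r p) (\<lambda>a. U (\<sigma> a) y - U a y)))"

definition empirical :: "'a list \<Rightarrow> 'a pmf" where
  "empirical xs = map_pmf (\<lambda>i. xs ! i) (pmf_of_set {..<length xs})"

end

theory Submission
  imports Defs
begin

definition bs :: "nat \<Rightarrow> nat set \<Rightarrow> real" where
  "bs T X = (\<Sum>k\<le>T. if k \<in> X then real (T choose k) else 0)"

lemma binom_prob: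
  "measure_pmf.prob (binomial_pmf T (1/2)) X = bs T X / 2^T"
proof -
  have "measure_pmf.prob (binomial_pmf T (1/2)) X = measure_pmf.prob (binomial_pmf T (1/2)) (X \<inter> {..T})"
    using measure_Int_set_pmf[of "binomial_pmf T (1/2)" X] by simp
  also have "\<dots> = (\<Sum>k\<in>X \<inter> {..T}. pmf (binomial_pmf T (1/2)) k)"
    by (rule measure_measure_pmf_finite) simp
  also have "\<dots> = (\<Sum>k\<in>{..T} \<inter> X. real (T choose k) / 2^T)"
    by (intro sum.cong) (auto simp: power_add[symmetric] power_one_over)
  also have "\<dots> = bs T X / 2^T"
    unfolding bs_def by (simp add: sum.inter_restrict sum_divide_distrib[symmetric] if_distrib cong: if_cong)
  finally show ?thesis .
qed

lemma bs_sym: "bs T X = bs T {k. T - k \<in> X}"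
  unfolding bs_def
  by (rule sum.reindex_bij_witness[of _ "\<lambda>k. T - k" "\<lambda>k. T - k"])
     (auto simp: binomial_symmetric[symmetric])

lemma bs_all: "bs T UNIV = 2^T"
  unfolding bs_def using choose_row_sum[of T] by (simp flip: of_nat_sum)

lemma bs_nonneg: "bs T X \<ge> 0"
  unfolding bs_def by (intro sum_nonneg) auto

lemma bs_cover: assumes "\<And>k. k \<le> T \<Longrightarrow> k \<in> X \<or> k \<in> Y \<or> k \<in> Z"
  shows "2^T \<le> bs T X + bs T Y + bs T Z"
proof -
  have "bs T UNIV \<le> bs T X + bs T Y + bs T Z"
    unfolding bs_def sum.distrib[symmetric]
    by (intro sum_mono) (use assms in auto)
  thus ?thesis by (simp add: bs_all)
qed

lemma aux: "(x::real) \<ge> 0 \<Longrightarrow> f \<noteq> 0 \<Longrightarrow> (2*x+2)*(2*x+1)*(F::real)/(((x+1)*f)*((x+1)*f)) = F/(f*f) * (2*(2*x+1))/(x+1)"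
proof -
  assume "f \<noteq> 0" "x \<ge> 0"
  moreover have "x + 1 \<noteq> 0" using \<open>x\<ge>0\<close> by linarith
  ultimately have nz: "((x+1)*f)*((x+1)*f) \<noteq> 0" "(f*f)*(x+1) \<noteq> 0" by auto
  have "F/(f*f) * (2*(2*x+1))/(x+1) = (F*(2*(2*x+1)))/((f*f)*(x+1))" by simp
  also have "\<dots> = (2*x+2)*(2*x+1)*(F::real)/(((x+1)*f)*((x+1)*f))"
    by (rule frac_eq_eq[THEN iffD2, OF nz(2) nz(1)]) (simp add: algebra_simps)
  finally show ?thesis by simp
qed

lemma central_bound: "real ((2*m) choose m)^2 * (3*m+1) \<le> 16^m"
proof (induction m)
  case 0 then show ?case by simp
next
  case (Suc m)
  have e: "real ((2*Suc m) choose Suc m) = real ((2*m) choose m) * (2*(2*real m+1)) / (real m+1)"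
  proof -
    have 1: "real ((2*Suc m) choose Suc m) = fact (2*Suc m) / (fact (Suc m) * fact (Suc m))"
      using binomial_fact[of "Suc m" "2*Suc m", where 'a=real] by simp
    have 2: "(fact (2*Suc m) :: real) = (2*real m+2)*(2*real m+1)*fact(2*m)"
      by (simp add: fact_Suc algebra_simps)
    have 3: "(fact (Suc m) :: real) = (real m+1) * fact m" by (simp add: fact_Suc)
    have "real ((2*Suc m) choose Suc m) = fact (2*m) / (fact m * fact m) * (2*(2*real m+1)) / (real m+1)"
      unfolding 1 2 3 by (rule aux) auto
    also have "fact (2*m) / (fact m * fact m) = (real ((2*m) choose m) :: real)"
      using binomial_fact[of m "2*m", where 'a=real] by simp
    finally show ?thesis .
  qed
  define x where "x = real m"
  have x0: "x \<ge> 0" unfolding x_def by simp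
  have "real ((2*Suc m) choose Suc m)^2 * (3*Suc m+1) = real ((2*m) choose m)^2 * ((2*(2*x+1))^2 * (3*x+4) / (x+1)^2)"
    unfolding e x_def by (simp add: field_simps power2_eq_square)
  also have "\<dots> \<le> real ((2*m) choose m)^2 * (16 * (3*x+1))"
  proof (rule mult_left_mono)
    have "(2*(2*x+1))^2 * (3*x+4) \<le> 16 * (3*x+1) * (x+1)^2"
      using x0 by (simp add: power2_eq_square algebra_simps)
    moreover have "(x+1)^2 > 0" using x0 by simp
    ultimately show "(2*(2*x+1))^2 * (3*x+4) / (x+1)^2 \<le> 16 * (3*x+1)"
      by (simp add: divide_le_eq)
  qed simp
  also have "\<dots> = 16 * (real ((2*m) choose m)^2 * (3*m+1))" unfolding x_def by simp
  also have "\<dots> \<le> 16 ^ Suc m" using Suc.IH by simp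
  finally show ?case by simp
qed


lemma choose_Suc_le: "(Suc n choose k) \<le> 2 * (n choose (n div 2))"
proof (cases k)
  case 0
  have "n choose (n div 2) \<ge> 1" by (simp add: Suc_leI)
  thus ?thesis using 0 by simp
next
  case (Suc j)
  have "(Suc n choose k) = (n choose j) + (n choose Suc j)" using Suc by simp
  also have "\<dots> \<le> 2 * (n choose (n div 2))" using binomial_maximum[of n j] binomial_maximum[of n "Suc j"] by simp
  finally show ?thesis .
qed

lemma max_bound: "real (T choose (T div 2))^2 * (3*(T div 2)+1) \<le> 4^T"
proof (cases "even T")
  case True
  then obtain m where T: "T = 2*m" by blast
  have "(4::real)^T = 16^m" unfolding T by (simp add: power_mult)
  thus ?thesis using central_bound[of m] T by simp
next
  case False
  then obtain m where T: "T = Suc (2*m)" using oddE by fastforce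
  have d: "T div 2 = m" unfolding T by simp
  have "real (T choose (T div 2)) \<le> 2 * real ((2*m) choose m)"
    using choose_Suc_le[of "2*m" "T div 2"] unfolding T by (simp flip: of_nat_mult)
  hence "real (T choose (T div 2))^2 \<le> (2 * real ((2*m) choose m))^2"
    by (intro power_mono) auto
  hence "real (T choose (T div 2))^2 * (3*(T div 2)+1) \<le> 4 * (real ((2*m) choose m)^2 * (3*m+1))"
    unfolding d by (simp add: power_mult_distrib mult_right_mono)
  also have "\<dots> \<le> 4 * 16^m" using central_bound[of m] by simp
  also have "\<dots> = 4^T" unfolding T by (simp add: power_mult)
  finally show ?thesis .
qed

lemma bs_cong: "(\<And>k. k \<le> T \<Longrightarrow> k \<in> X \<longleftrightarrow> k \<in> Y) \<Longrightarrow> bs T X = bs T Y"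
  unfolding bs_def by (intro sum.cong) auto

lemma bs_le_card: "bs T X \<le> real (card ({..T} \<inter> X)) * real (T choose (T div 2))"
proof -
  have "bs T X = (\<Sum>k\<in>{..T} \<inter> X. real (T choose k))"
    unfolding bs_def by (simp add: sum.inter_restrict)
  also have "\<dots> \<le> (\<Sum>k\<in>{..T} \<inter> X. real (T choose (T div 2)))"
    by (intro sum_mono) (simp add: binomial_maximum)
  finally show ?thesis by simp
qed

lemma card_interval:
  fixes S :: "nat set"
  assumes "finite S" "\<And>k. k \<in> S \<Longrightarrow> a < real k \<and> real k < b" "a \<le> b"
  shows "real (card S) \<le> b - a + 1"
proof (cases "S = {}")
  case True thus ?thesis using assms by simp
next
  case False
  have "S \<subseteq> {Min S..Max S}" using assms(1) by auto
  hence "card S \<le> card {Min S..Max S}" by (intro card_mono) auto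
  also have "\<dots> = Suc (Max S) - Min S" by simp
  finally have c: "real (card S) \<le> real (Max S) + 1 - real (Min S)"
    using Min_le[OF assms(1), of "Max S"] Max_in[OF assms(1) False] by linarith
  have "real (Max S) < b" using assms(2)[OF Max_in[OF assms(1) False]] by simp
  moreover have "a < real (Min S)" using assms(2)[OF Min_in[OF assms(1) False]] by simp
  ultimately show ?thesis using c by linarith
qed

lemma B1: "measure_pmf.prob (binomial_pmf T (1/2)) {k. T \<le> 2*k} \<ge> 1/2"
  "measure_pmf.prob (binomial_pmf T (1/2)) {k. 2*k \<le> T} \<ge> 1/2"
proof -
  have eq: "bs T {k. T \<le> 2*k} = bs T {k. 2*k \<le> T}"
    by (subst bs_sym) (rule bs_cong, auto)
  have "2^T \<le> bs T {k. T \<le> 2*k} + bs T {k. 2*k \<le> T} + bs T {}"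
    by (rule bs_cover) auto
  moreover have "bs T {} = 0" unfolding bs_def by simp
  ultimately have "bs T {k. T \<le> 2*k} \<ge> 2^T/2" using eq by simp
  thus "measure_pmf.prob (binomial_pmf T (1/2)) {k. T \<le> 2*k} \<ge> 1/2"
    "measure_pmf.prob (binomial_pmf T (1/2)) {k. 2*k \<le> T} \<ge> 1/2"
    unfolding binom_prob using eq by (simp_all add: field_simps)
qed

lemma B2: assumes "T \<ge> 1" shows "measure_pmf.prob (binomial_pmf T (1/2)) {k. 2*k \<noteq> T} \<ge> 1/2"
proof -
  have Z: "bs T {k. 2*k = T} \<le> 2^T/2"
  proof (cases "even T")
    case False
    hence "bs T {k. 2*k = T} = 0" unfolding bs_def by (intro sum.neutral) auto
    thus ?thesis by simp
  next
    case True
    have "{..T} \<inter> {k. 2*k = T} \<subseteq> {T div 2}" by auto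
    hence "card ({..T} \<inter> {k. 2*k = T}) \<le> 1" using card_mono[of "{T div 2}"] by fastforce
    hence "real (card ({..T} \<inter> {k. 2*k = T})) * real (T choose (T div 2)) \<le> 1 * real (T choose (T div 2))"
      by (intro mult_right_mono) auto
    hence "bs T {k. 2*k = T} \<le> real (T choose (T div 2))"
      using bs_le_card[of T "{k. 2*k = T}"] by linarith
    also have "real (T choose (T div 2)) \<le> 2^T/2"
    proof -
      have m: "T div 2 \<ge> 1" using True assms by presburger
      have "real (T choose (T div 2))^2 * 4 \<le> real (T choose (T div 2))^2 * (3*(T div 2)+1)"
        using m by (intro mult_left_mono) auto
      also have "\<dots> \<le> 4^T" by (rule max_bound)
      finally have c4: "real (T choose (T div 2))^2 * 4 \<le> 4^T" .
      have "(2^T/2)^2 = (4::real)^T/4"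
      proof -
        have "(2::real)^T * 2^T = 4^T" by (simp flip: power_mult_distrib)
        thus ?thesis by (simp add: power2_eq_square)
      qed
      with c4 have "real (T choose (T div 2))^2 \<le> (2^T/2)^2" by linarith
      thus ?thesis by (rule power2_le_imp_le) simp
    qed
    finally show ?thesis .
  qed
  have "2^T \<le> bs T {k. 2*k \<noteq> T} + bs T {k. 2*k = T} + bs T {}"
    by (rule bs_cover) auto
  moreover have "bs T {} = 0" unfolding bs_def by simp
  ultimately have "bs T {k. 2*k \<noteq> T} \<ge> 2^T/2" using Z by simp
  thus ?thesis unfolding binom_prob by (simp add: field_simps)
qed


lemma B3:
  assumes T: "T \<ge> 20" and r: "r = sqrt (real T) / 2500"
  shows "measure_pmf.prob (binomial_pmf T (1/2)) {k. real T/2 + r \<le> real k} \<ge> 1/3"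
    "measure_pmf.prob (binomial_pmf T (1/2)) {k. real k \<le> real T/2 - r} \<ge> 1/3"
proof -
  define X where "X = {k. real T/2 + r \<le> real k}"
  define Y where "Y = {k. real k \<le> real T/2 - r}"
  define M where "M = {k. real T/2 - r < real k \<and> real k < real T/2 + r}"
  define C where "C = real (T choose (T div 2))"
  have r0: "r \<ge> 0" unfolding r by simp
  have r2: "r^2 = real T / 6250000" unfolding r by (simp add: power_divide)
  have eq: "bs T X = bs T Y"
  proof (subst bs_sym, rule bs_cong)
    fix k assume k: "k \<le> T"
    hence "real (T - k) = real T - real k" by (simp add: of_nat_diff)
    thus "k \<in> {k. T - k \<in> X} \<longleftrightarrow> k \<in> Y" unfolding X_def Y_def by simp linarith
  qed
  have cov: "2^T \<le> bs T X + bs T Y + bs T M"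
  proof (rule bs_cover)
    fix k assume "k \<le> T"
    show "k \<in> X \<or> k \<in> Y \<or> k \<in> M"
    proof (cases "real T/2 + r \<le> real k")
      case True thus ?thesis unfolding X_def by blast
    next
      case F1: False
      show ?thesis
      proof (cases "real k \<le> real T/2 - r")
        case True thus ?thesis unfolding Y_def by blast
      next
        case False hence "real T/2 - r < real k \<and> real k < real T/2 + r" using F1 by linarith
        thus ?thesis unfolding M_def by blast
      qed
    qed
  qed
  have cardM: "real (card ({..T} \<inter> M)) \<le> 2*r + 1"
  proof -
    have "real (card ({..T} \<inter> M)) \<le> (real T/2 + r) - (real T/2 - r) + 1"
      by (rule card_interval) (simp, simp add: M_def, use r0 in linarith)
    thus ?thesis by simp
  qed
  have "bs T M \<le> (2*r+1) * C"
    using bs_le_card[of T M] cardM unfolding C_def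
    by (smt (verit) mult_right_mono of_nat_0_le_iff)
  also have "(2*r+1) * C \<le> 2^T/3"
  proof -
    have "T \<le> 2*(T div 2) + 1" by presburger
    hence "real T \<le> 2*real (T div 2) + 1" by linarith
    hence m: "3*real (T div 2) + 1 \<ge> (3*real T - 1)/2" by (simp add: field_simps)
    have "(2*r+1)^2 \<le> 8*r^2 + 2" using sum_squares_ge_zero[of "2*r-1" 0] by (simp add: power2_eq_square algebra_simps)
    also have "\<dots> = 8*real T/6250000 + 2" using r2 by simp
    finally have "9*(2*r+1)^2 \<le> 3*real (T div 2) + 1" using m T by linarith
    hence "9*(2*r+1)^2 * C^2 \<le> (3*real (T div 2) + 1) * C^2" by (intro mult_right_mono) auto
    also have "\<dots> \<le> 4^T" using max_bound[of T] unfolding C_def by (simp add: algebra_simps)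
    also have "(4::real)^T = (2^T)^2"
    proof -
      have "((2::real)^T)^2 = (2^2)^T" by (simp only: power_mult[symmetric] mult.commute)
      thus ?thesis by simp
    qed
    finally have le: "9*(2*r+1)^2 * C^2 \<le> (2^T)^2" .
    have "(3*((2*r+1)*C))^2 = 9*(2*r+1)^2 * C^2" by (simp add: power2_eq_square)
    with le have "(3*((2*r+1)*C))^2 \<le> (2^T)^2" by simp
    hence "3*((2*r+1)*C) \<le> 2^T" by (rule power2_le_imp_le) simp
    thus ?thesis by simp
  qed
  finally have "bs T M \<le> 2^T/3" .
  hence "bs T X \<ge> 2^T/3" "bs T Y \<ge> 2^T/3" using cov eq by linarith+
  thus "measure_pmf.prob (binomial_pmf T (1/2)) {k. real T/2 + r \<le> real k} \<ge> 1/3"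
    "measure_pmf.prob (binomial_pmf T (1/2)) {k. real k \<le> real T/2 - r} \<ge> 1/3"
    unfolding binom_prob X_def Y_def by (simp_all add: field_simps)
qed



definition u0 :: "nat \<Rightarrow> real" where
  "u0 a = (if a = 0 then 1 else if a = 1 then 61/80 else if a = 2 then 21/80 else 0)"
definition u1 :: "nat \<Rightarrow> real" where
  "u1 a = (if a = 0 then 0 else if a = 1 then 21/80 else if a = 2 then 61/80 else 1)"
definition UU :: "nat \<Rightarrow> real \<Rightarrow> real" where
  "UU a y = (if y = 1 then u1 a else u0 a)"
definition LL :: "nat \<Rightarrow> real \<Rightarrow> real" where
  "LL a F = u0 a + F * (u1 a - u0 a)"
definition best :: "real \<Rightarrow> nat" where
  "best F = (if F \<le> 19/40 then 0 else if F \<le> 1/2 then 1 else if F \<le> 21/40 then 2 else 3)"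
definition gpt :: "bool \<Rightarrow> real \<times> real" where
  "gpt b = (1/2, if b then 1 else 0)"
definition DD :: "(real \<times> real) pmf" where
  "DD = map_pmf gpt (bernoulli_pmf (1/2))"
definition AA :: "nat set" where "AA = {0,1,2,3}"

lemma best_AA: "best F \<in> AA" unfolding best_def AA_def by auto

lemma best_ge: "a \<in> AA \<Longrightarrow> LL a F \<le> LL (best F) F"
  unfolding AA_def best_def LL_def u0_def u1_def by auto

lemma UU_bound: "UU a y \<ge> 0" "UU a y \<le> 1"
  unfolding UU_def u0_def u1_def by auto

lemma sum_list_if: "sum_list (map (\<lambda>b. if b then x else y) bl) =
   real (length (filter id bl)) * x + (real (length bl) - real (length (filter id bl))) * (y::real)"
  by (induction bl) (auto simp: algebra_simps)

lemma integral_le_1: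
  fixes f :: "'a \<Rightarrow> real"
  assumes "\<And>x. \<bar>f x\<bar> \<le> 1"
  shows "measure_pmf.expectation M f \<le> 1"
proof -
  have "integrable (measure_pmf M) f"
    by (rule measure_pmf.integrable_const_bound[where B=1]) (use assms in auto)
  thus ?thesis by (rule measure_pmf.integral_le_const) (use assms abs_le_D1 in auto)
qed

lemma replicate_map_pmf: "replicate_pmf n (map_pmf f p) = map_pmf (map f) (replicate_pmf n p)"
  by (induction n) (simp_all add: map_pmf_def bind_assoc_pmf bind_return_pmf bind_return_pmf')

lemma prob_mono_pmf:
  assumes "\<And>x. x \<in> set_pmf M \<Longrightarrow> x \<in> A \<Longrightarrow> x \<in> B"
  shows "measure_pmf.prob M A \<le> measure_pmf.prob M B"
proof -
  have "measure_pmf.prob M A = measure_pmf.prob M (A \<inter> set_pmf M)"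
    by (simp add: measure_Int_set_pmf)
  also have "\<dots> \<le> measure_pmf.prob M B"
    by (rule measure_pmf.finite_measure_mono) (use assms in auto)
  finally show ?thesis .
qed

lemma regret_lb:
  assumes r: "response_fn AA r" and T: "length bl = T" "T \<ge> 1"
  defines "F \<equiv> real (length (filter id bl)) / real T"
  shows "swap_regret AA UU r (empirical (map gpt bl)) \<ge>
           LL (best F) F - (\<Sum>a\<in>AA. pmf (r (1/2)) a * LL a F)"
proof -
  define q where "q = r (1/2)"
  have sq: "set_pmf q \<subseteq> AA" using r unfolding response_fn_def q_def by auto
  have finA: "finite AA" unfolding AA_def by simp
  define b where "b = best F"
  define val where "val \<sigma> = measure_pmf.expectation (empirical (map gpt bl))
          (\<lambda>(p, y). measure_pmf.expectation (r p) (\<lambda>a. UU (\<sigma> a) y - UU a y))" for \<sigma>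
  have bdd: "bdd_above (val ` {\<sigma>. \<sigma> ` AA \<subseteq> AA})"
  proof (rule bdd_aboveI2)
    fix \<sigma> show "val \<sigma> \<le> 1" unfolding val_def
    proof (rule integral_le_1)
      fix x :: "real \<times> real"
      obtain p y where x: "x = (p, y)" by (cases x)
      have b1: "\<bar>UU (\<sigma> a) y - UU a y\<bar> \<le> 1" for a
        using UU_bound[of "\<sigma> a" y] UU_bound[of a y] by auto
      have b2: "\<bar>-(UU (\<sigma> a) y - UU a y)\<bar> \<le> 1" for a
        using UU_bound[of "\<sigma> a" y] UU_bound[of a y] by auto
      have "measure_pmf.expectation (r p) (\<lambda>a. UU (\<sigma> a) y - UU a y) \<le> 1"
        by (rule integral_le_1) (rule b1)
      moreover have "- measure_pmf.expectation (r p) (\<lambda>a. UU (\<sigma> a) y - UU a y) \<le> 1"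
        using integral_le_1[of "\<lambda>a. -(UU (\<sigma> a) y - UU a y)", OF b2] by (simp only: integral_minus)
      ultimately show "\<bar>(case x of (p, y) \<Rightarrow> measure_pmf.expectation (r p) (\<lambda>a. UU (\<sigma> a) y - UU a y))\<bar> \<le> 1"
        unfolding x by (simp only: prod.case abs_le_iff)
    qed
  qed
  have "val (\<lambda>_. b) \<le> swap_regret AA UU r (empirical (map gpt bl))"
    unfolding swap_regret_def val_def[symmetric]
    by (rule cSUP_upper[OF _ bdd]) (use best_AA in \<open>auto simp: b_def\<close>)
  moreover have "val (\<lambda>_. b) = LL b F - (\<Sum>a\<in>AA. pmf q a * LL a F)"
  proof -
    define H1 where "H1 = u1 b - (\<Sum>a\<in>AA. pmf q a * u1 a)"
    define H0 where "H0 = u0 b - (\<Sum>a\<in>AA. pmf q a * u0 a)"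
    have s1: "(\<Sum>a\<in>AA. pmf q a) = 1" by (rule sum_pmf_eq_1[OF finA sq])
    have h: "measure_pmf.expectation q (\<lambda>a. UU b y - UU a y) = UU b y - (\<Sum>a\<in>AA. pmf q a * UU a y)" for y
    proof -
      have "measure_pmf.expectation q (\<lambda>a. UU b y - UU a y) = (\<Sum>a\<in>AA. (UU b y - UU a y) * pmf q a)"
        by (rule integral_measure_pmf_real[OF finA]) (use sq in auto)
      also have "\<dots> = UU b y * (\<Sum>a\<in>AA. pmf q a) - (\<Sum>a\<in>AA. pmf q a * UU a y)"
        by (simp add: algebra_simps sum_subtractf sum_distrib_left)
      finally show ?thesis using s1 by simp
    qed
    have hg: "(case gpt bb of (p, y) \<Rightarrow> measure_pmf.expectation (r p) (\<lambda>a. UU b y - UU a y)) = (if bb then H1 else H0)" for bb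
      unfolding gpt_def H1_def H0_def using h[of 1] h[of 0] by (auto simp: q_def UU_def)
    have ne: "{..<T} \<noteq> {}" using T by (auto simp: lessThan_empty_iff)
    have "val (\<lambda>_. b) = (\<Sum>i\<in>{..<T}. (case map gpt bl ! i of (p, y) \<Rightarrow> measure_pmf.expectation (r p) (\<lambda>a. UU b y - UU a y))) / real T"
      unfolding val_def empirical_def using T ne by (simp add: integral_pmf_of_set)
    also have "(\<Sum>i\<in>{..<T}. (case map gpt bl ! i of (p, y) \<Rightarrow> measure_pmf.expectation (r p) (\<lambda>a. UU b y - UU a y)))
       = (\<Sum>i\<in>{..<length bl}. (\<lambda>bb. if bb then H1 else H0) (bl ! i))"
      using T by (intro sum.cong) (auto simp: hg)
    also have "\<dots> = sum_list (map (\<lambda>bb. if bb then H1 else H0) bl)"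
      by (simp add: sum_list_sum_nth atLeast0LessThan)
    also have "\<dots> = real (length (filter id bl)) * H1 + (real T - real (length (filter id bl))) * H0"
      using T by (simp add: sum_list_if)
    finally have "val (\<lambda>_. b) = F * H1 + (1 - F) * H0"
      unfolding F_def using T by (simp add: field_simps)
    also have "\<dots> = LL b F - (\<Sum>a\<in>AA. pmf q a * LL a F)"
    proof -
      have "(\<Sum>a\<in>AA. pmf q a * LL a F) = (1 - F) * (\<Sum>a\<in>AA. pmf q a * u0 a) + F * (\<Sum>a\<in>AA. pmf q a * u1 a)"
      proof -
        have "(\<Sum>a\<in>AA. pmf q a * LL a F) = (\<Sum>a\<in>AA. (1 - F) * (pmf q a * u0 a) + F * (pmf q a * u1 a))"
          unfolding LL_def by (intro sum.cong) (auto simp: algebra_simps)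
        thus ?thesis by (simp only: sum.distrib sum_distrib_left)
      qed
      thus ?thesis unfolding H1_def H0_def LL_def by (simp add: algebra_simps)
    qed
    finally show ?thesis .
  qed
  ultimately show ?thesis unfolding b_def q_def by simp
qed


lemma LL_diffs:
  "LL 1 F - LL 0 F = F/2 - 19/80" "LL 0 F - LL 1 F = 19/80 - F/2"
  "LL 2 F - LL 1 F = F - 1/2" "LL 1 F - LL 2 F = 1/2 - F"
  "LL 3 F - LL 2 F = F/2 - 21/80" "LL 2 F - LL 3 F = 21/80 - F/2"
  unfolding LL_def u0_def u1_def by (simp_all add: algebra_simps)

lemma V_ge: "b \<in> AA \<Longrightarrow> LL (best F) F - LL a F \<ge> LL b F - LL a F"
  using best_ge[of b F] by linarith

lemma events:
  assumes T: "T \<ge> 1" and a: "a \<in> AA"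
  shows "measure_pmf.prob (binomial_pmf T (1/2))
     {k. 1/(2500 * sqrt (real T)) \<le> LL (best (real k/real T)) (real k/real T) - LL a (real k/real T)} \<ge> 1/3"
proof -
  define s where "s = sqrt (real T)"
  define \<delta> where "\<delta> = 1/(2500 * s)"
  have Tpos: "real T > 0" using T by simp
  have s1: "s \<ge> 1" unfolding s_def using T by simp
  have ss: "s * s = real T" unfolding s_def by simp
  have d: "\<delta> \<le> 1/2500" unfolding \<delta>_def using s1 by (simp add: field_simps)
  have d0: "\<delta> > 0" unfolding \<delta>_def using s1 by simp
  let ?E = "{k. \<delta> \<le> LL (best (real k/real T)) (real k/real T) - LL a (real k/real T)}"
  have AA: "0 \<in> AA" "1 \<in> AA" "2 \<in> AA" "3 \<in> AA" unfolding AA_def by auto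
  have Fge: "real k / real T \<ge> 1/2" if "T \<le> 2*k" for k
    using that Tpos by (simp add: field_simps)
  have Fle: "real k / real T \<le> 1/2" if "2*k \<le> T" for k
    using that Tpos by (simp add: field_simps)
  have Fhi: "real k / real T \<ge> 10/19" if "2*k \<noteq> T" "T \<le> 19" "\<not> 2*k < T" for k
  proof -
    have "19 * real k \<ge> 10 * real T" using that by linarith
    thus ?thesis using Tpos by (simp add: field_simps)
  qed
  have Flo: "real k / real T \<le> 9/19" if "2*k \<noteq> T" "T \<le> 19" "2*k < T" for k
  proof -
    have "19 * real k \<le> 9 * real T" using that by linarith
    thus ?thesis using Tpos by (simp add: field_simps)
  qed
  have Fbig: "real k / real T - 1/2 \<ge> \<delta>" if "real T/2 + sqrt (real T)/2500 \<le> real k" for k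
  proof -
    have "real k / real T - 1/2 = (real k - real T/2) / real T" using Tpos by (simp add: field_simps)
    also have "\<dots> \<ge> (s/2500) / real T" using that Tpos unfolding s_def by (intro divide_right_mono) auto
    also have "(s/2500) / real T = \<delta>" unfolding \<delta>_def ss[symmetric] using s1 by (simp add: field_simps)
    finally show ?thesis .
  qed
  have Fsmall: "1/2 - real k / real T \<ge> \<delta>" if "real k \<le> real T/2 - sqrt (real T)/2500" for k
  proof -
    have "1/2 - real k / real T = (real T/2 - real k) / real T" using Tpos by (simp add: field_simps)
    also have "\<dots> \<ge> (s/2500) / real T" using that Tpos unfolding s_def by (intro divide_right_mono) auto
    also have "(s/2500) / real T = \<delta>" unfolding \<delta>_def ss[symmetric] using s1 by (simp add: field_simps)
    finally show ?thesis .
  qed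
  have "a = 0 \<or> a = 1 \<or> a = 2 \<or> a = 3" using a unfolding AA_def by auto
  hence "measure_pmf.prob (binomial_pmf T (1/2)) ?E \<ge> 1/3"
  proof (elim disjE)
    assume a0: "a = 0"
    have "measure_pmf.prob (binomial_pmf T (1/2)) {k. T \<le> 2*k} \<le> measure_pmf.prob (binomial_pmf T (1/2)) ?E"
    proof (rule prob_mono_pmf)
      fix k assume "k \<in> {k. T \<le> 2*k}"
      hence "real k / real T \<ge> 1/2" using Fge by auto
      thus "k \<in> ?E" using V_ge[OF AA(2), of "real k/real T" 0] LL_diffs(1)[of "real k/real T"] d a0 by auto
    qed
    thus ?thesis using B1(1)[of T] by linarith
  next
    assume a3: "a = 3"
    have "measure_pmf.prob (binomial_pmf T (1/2)) {k. 2*k \<le> T} \<le> measure_pmf.prob (binomial_pmf T (1/2)) ?E"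
    proof (rule prob_mono_pmf)
      fix k assume "k \<in> {k. 2*k \<le> T}"
      hence "real k / real T \<le> 1/2" using Fle by auto
      thus "k \<in> ?E" using V_ge[OF AA(3), of "real k/real T" 3] LL_diffs(6)[of "real k/real T"] d a3 by auto
    qed
    thus ?thesis using B1(2)[of T] by linarith
  next
    assume a1: "a = 1"
    show ?thesis
    proof (cases "T \<le> 19")
      case True
      have "measure_pmf.prob (binomial_pmf T (1/2)) {k. 2*k \<noteq> T} \<le> measure_pmf.prob (binomial_pmf T (1/2)) ?E"
      proof (rule prob_mono_pmf)
        fix k assume k: "k \<in> {k. 2*k \<noteq> T}"
        show "k \<in> ?E"
        proof (cases "2*k < T")
          case True
          hence "real k / real T \<le> 9/19" using Flo k \<open>T \<le> 19\<close> by auto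
          thus ?thesis using V_ge[OF AA(1), of "real k/real T" 1] LL_diffs(2)[of "real k/real T"] d a1 by auto
        next
          case False
          hence "real k / real T \<ge> 10/19" using Fhi k \<open>T \<le> 19\<close> by auto
          thus ?thesis using V_ge[OF AA(3), of "real k/real T" 1] LL_diffs(3)[of "real k/real T"] d a1 by auto
        qed
      qed
      thus ?thesis using B2[OF T] by linarith
    next
      case False
      have "measure_pmf.prob (binomial_pmf T (1/2)) {k. real T/2 + sqrt (real T)/2500 \<le> real k} \<le> measure_pmf.prob (binomial_pmf T (1/2)) ?E"
      proof (rule prob_mono_pmf)
        fix k assume "k \<in> {k. real T/2 + sqrt (real T)/2500 \<le> real k}"
        hence "real k / real T - 1/2 \<ge> \<delta>" using Fbig by auto
        thus "k \<in> ?E" using V_ge[OF AA(3), of "real k/real T" 1] LL_diffs(3)[of "real k/real T"] a1 by auto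
      qed
      thus ?thesis using B3(1)[of T "sqrt (real T)/2500"] False by linarith
    qed
  next
    assume a2: "a = 2"
    show ?thesis
    proof (cases "T \<le> 19")
      case True
      have "measure_pmf.prob (binomial_pmf T (1/2)) {k. 2*k \<noteq> T} \<le> measure_pmf.prob (binomial_pmf T (1/2)) ?E"
      proof (rule prob_mono_pmf)
        fix k assume k: "k \<in> {k. 2*k \<noteq> T}"
        show "k \<in> ?E"
        proof (cases "2*k < T")
          case True
          hence "real k / real T \<le> 9/19" using Flo k \<open>T \<le> 19\<close> by auto
          thus ?thesis using V_ge[OF AA(2), of "real k/real T" 2] LL_diffs(4)[of "real k/real T"] d a2 by auto
        next
          case False
          hence "real k / real T \<ge> 10/19" using Fhi k \<open>T \<le> 19\<close> by auto
          thus ?thesis using V_ge[OF AA(4), of "real k/real T" 2] LL_diffs(5)[of "real k/real T"] d a2 by auto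
        qed
      qed
      thus ?thesis using B2[OF T] by linarith
    next
      case False
      have "measure_pmf.prob (binomial_pmf T (1/2)) {k. real k \<le> real T/2 - sqrt (real T)/2500} \<le> measure_pmf.prob (binomial_pmf T (1/2)) ?E"
      proof (rule prob_mono_pmf)
        fix k assume "k \<in> {k. real k \<le> real T/2 - sqrt (real T)/2500}"
        hence "1/2 - real k / real T \<ge> \<delta>" using Fsmall by auto
        thus "k \<in> ?E" using V_ge[OF AA(2), of "real k/real T" 2] LL_diffs(4)[of "real k/real T"] a2 by auto
      qed
      thus ?thesis using B3(2)[of T "sqrt (real T)/2500"] False by linarith
    qed
  qed
  thus ?thesis unfolding \<delta>_def s_def .
qed


lemma key:
  assumes w0: "\<And>a. w a \<ge> (0::real)" and w1: "(\<Sum>a\<in>AA. w a) = 1" and a: "a \<in> AA" and wa: "w a \<ge> 1/4"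
  shows "LL (best F) F - (\<Sum>a'\<in>AA. w a' * LL a' F) \<ge> (LL (best F) F - LL a F) / 4"
proof -
  have finA: "finite AA" unfolding AA_def by simp
  have "LL (best F) F - (\<Sum>a'\<in>AA. w a' * LL a' F) = (\<Sum>a'\<in>AA. w a' * (LL (best F) F - LL a' F))"
    using w1 by (simp add: algebra_simps sum_subtractf sum_distrib_right[symmetric])
  also have "\<dots> \<ge> w a * (LL (best F) F - LL a F)"
    by (rule member_le_sum[OF a _ finA, where f="\<lambda>a'. w a' * (LL (best F) F - LL a' F)"])
       (use w0 best_ge in auto)
  moreover have "w a * (LL (best F) F - LL a F) \<ge> 1/4 * (LL (best F) F - LL a F)"
    using best_ge[OF a, of F] wa by (intro mult_right_mono) auto
  ultimately show ?thesis by linarith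
qed

lemma quarter:
  assumes "(\<Sum>a\<in>AA. w a) = (1::real)" shows "\<exists>a\<in>AA. w a \<ge> 1/4"
proof (rule ccontr)
  assume "\<not> ?thesis"
  hence "w 0 < 1/4" "w 1 < 1/4" "w 2 < 1/4" "w 3 < 1/4" unfolding AA_def by auto
  moreover have "(\<Sum>a\<in>AA. w a) = w 0 + w 1 + w 2 + w 3" unfolding AA_def by simp
  ultimately show False using assms by linarith
qed

lemma calibrated_DD: "calibrated DD"
proof -
  have set: "set_pmf DD = {(1/2, 0), (1/2, 1)}"
    unfolding DD_def gpt_def by (auto simp: UNIV_bool)
  have cond: "cond_pmf DD {z. fst z = 1/2} = DD"
  proof (rule pmf_eqI)
    fix x
    have ne: "set_pmf DD \<inter> {z. fst z = 1/2} \<noteq> {}" using set by auto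
    have m: "measure_pmf.prob DD {z. fst z = 1/2} = 1"
      unfolding DD_def by (simp add: gpt_def)
    show "pmf (cond_pmf DD {z. fst z = 1/2}) x = pmf DD x"
    proof (cases "fst x = 1/2")
      case True thus ?thesis using pmf_cond[OF ne, of x] m by simp
    next
      case False
      hence "x \<notin> set_pmf DD" using set by auto
      hence "pmf DD x = 0" by (simp add: set_pmf_iff)
      moreover have "pmf (cond_pmf DD {z. fst z = 1/2}) x = 0" using pmf_cond[OF ne, of x] False by simp
      ultimately show ?thesis by simp
    qed
  qed
  have e: "measure_pmf.expectation DD snd = 1/2"
    unfolding DD_def by (simp add: gpt_def)
  show ?thesis unfolding calibrated_def using set cond e by auto
qed

lemma task_AA: "decision_task AA UU"
  unfolding decision_task_def AA_def UU_def u0_def u1_def by auto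


theorem lemma8p2:
  shows "\<exists>c::real. c > 0 \<and>
    (\<exists>D A U. calibrated D \<and> decision_task A U \<and>
      (\<forall>T::nat. T \<ge> 1 \<longrightarrow>
        (\<forall>r. response_fn A r \<longrightarrow>
           measure_pmf.prob (replicate_pmf T D)
             {xs. swap_regret A U r (empirical xs) \<ge> c / sqrt (real T)} \<ge> 1/3)))"
proof -
  have main: "measure_pmf.prob (replicate_pmf T DD)
      {xs. swap_regret AA UU r (empirical xs) \<ge> (1/10000) / sqrt (real T)} \<ge> 1/3"
    if T: "T \<ge> 1" and r: "response_fn AA r" for T r
  proof -
    define q where "q = r (1/2)"
    define w where "w a = pmf q a" for a
    have sq: "set_pmf q \<subseteq> AA" using r unfolding response_fn_def q_def by auto
    have w1: "(\<Sum>a\<in>AA. w a) = 1" unfolding w_def by (rule sum_pmf_eq_1) (simp add: AA_def, rule sq)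
    obtain a where a: "a \<in> AA" "w a \<ge> 1/4" using quarter[OF w1] by blast
    define G where "G k = LL (best (real k/real T)) (real k/real T) - (\<Sum>a'\<in>AA. w a' * LL a' (real k/real T))" for k
    define R where "R = replicate_pmf T (bernoulli_pmf (1/2))"
    have s1: "sqrt (real T) \<ge> 1" using T by simp
    have "1/3 \<le> measure_pmf.prob (binomial_pmf T (1/2))
       {k. 1/(2500 * sqrt (real T)) \<le> LL (best (real k/real T)) (real k/real T) - LL a (real k/real T)}"
      by (rule events[OF T a(1)])
    also have "\<dots> \<le> measure_pmf.prob (binomial_pmf T (1/2)) {k. (1/10000) / sqrt (real T) \<le> G k}"
    proof (rule prob_mono_pmf)
      fix k assume "k \<in> {k. 1/(2500 * sqrt (real T)) \<le> LL (best (real k/real T)) (real k/real T) - LL a (real k/real T)}"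
      hence h: "1/(2500 * sqrt (real T)) \<le> LL (best (real k/real T)) (real k/real T) - LL a (real k/real T)" by simp
      have "G k \<ge> (LL (best (real k/real T)) (real k/real T) - LL a (real k/real T)) / 4"
        unfolding G_def by (rule key[OF _ w1 a]) (simp add: w_def)
      moreover have "(1/10000) / sqrt (real T) = (1/(2500 * sqrt (real T))) / 4" by simp
      ultimately show "k \<in> {k. (1/10000) / sqrt (real T) \<le> G k}" using h by simp
    qed
    also have "\<dots> = measure_pmf.prob R {bl. (1/10000) / sqrt (real T) \<le> G (length (filter id bl))}"
      unfolding R_def binomial_pmf_altdef[of "1/2" T, simplified] by (simp add: vimage_def)
    also have "\<dots> \<le> measure_pmf.prob R {bl. (1/10000) / sqrt (real T) \<le> swap_regret AA UU r (empirical (map gpt bl))}"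
    proof (rule prob_mono_pmf)
      fix bl assume bl: "bl \<in> set_pmf R" "bl \<in> {bl. (1/10000) / sqrt (real T) \<le> G (length (filter id bl))}"
      have len: "length bl = T" using bl(1) unfolding R_def by (simp add: set_replicate_pmf)
      have "G (length (filter id bl)) \<le> swap_regret AA UU r (empirical (map gpt bl))"
        using regret_lb[OF r len T] unfolding G_def w_def q_def .
      thus "bl \<in> {bl. (1/10000) / sqrt (real T) \<le> swap_regret AA UU r (empirical (map gpt bl))}"
        using bl(2) by simp
    qed
    also have "\<dots> = measure_pmf.prob (replicate_pmf T DD)
      {xs. swap_regret AA UU r (empirical xs) \<ge> (1/10000) / sqrt (real T)}"
      unfolding R_def DD_def replicate_map_pmf by (simp add: vimage_def)
    finally show ?thesis .
  qed
  show ?thesis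
    by (rule exI[of _ "1/10000"], intro conjI, simp, rule exI[of _ DD], rule exI[of _ AA], rule exI[of _ UU])
       (use calibrated_DD task_AA main in auto)
qed


end
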